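(* Let $s\ge 2$ and $0\le v\le s$ be integers. Consider all numbers $S(v,d,n)$ with $d,n$ nonnegative integers and $v+d+n=s$. Then $$\sum_{\substack{d,n\ge 0\\ d+n=s-v}} S(v,d,n)=\begin{cases}\binom{s-1}{2} & \text{if } v=0,\\[2pt] \binom{s-1}{v}+\binom{s-1}{v+2} & \text{if } v\ge 1.\end{cases}$$ Moreover, the number of pairs $(d,n)$ with $d+n=s-v$ for which $S(v,d,n)\neq 0$ is $s-2$ if $v=0$ and $s-v$ if $v\ge 1$.
   Context: Binomial convention: for integers $M,m$, $\binom{M}{m}=\frac{M!}{m!(M-m)!}$ if $0\le m\le M$, and $\binom{M}{m}=0$ otherwise (in particular whenever $M<0$ or $m<0$ or $m>M$). For nonnegative integers $v,d,n$ the hypersolid number is defined by $$S(v,d,n)=\binom{v+n-2}{v-1}+d\binom{v+n-2}{v}.$$ (So $S(0,d,n)=d$ for $n\ge2$ and $0$ for $n\in\{0,1\}$; $S(1,d,n)=1+d(n-1)$ for $n\ge1$ and $S(1,d,0)=0$; $S(v,d,0)=0$.) *)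

theory Defs
  imports Main
begin

definition ibinom :: "int \<Rightarrow> int \<Rightarrow> nat" where
  "ibinom M m = (if 0 \<le> m \<and> m \<le> M then nat M choose nat m else 0)"

definition hypersolid :: "nat \<Rightarrow> nat \<Rightarrow> nat \<Rightarrow> nat" where
  "hypersolid v d n =
     ibinom (int v + int n - 2) (int v - 1) + d * ibinom (int v + int n - 2) (int v)"

end

theory Submission
  imports Defs
begin

lemma hA: "(\<Sum>k<m. (w+k) choose w) = (w+m) choose (w+1)"
  by (induction m) (auto simp: binomial_Suc_Suc)

lemma hB: "(\<Sum>k<m. (w+k) choose (w+1)) = (w+m) choose (w+2)"
  by (induction m) (auto simp: binomial_Suc_Suc numeral_2_eq_2)

lemma hC: "(\<Sum>k<m. (m-(k+1)) * ((w+k) choose (w+1))) = (w+m) choose (w+3)"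
proof (induction m)
  case 0 then show ?case by simp
next
  case (Suc m)
  have "(\<Sum>k<Suc m. (Suc m-(k+1)) * ((w+k) choose (w+1)))
      = (\<Sum>k<m. (m-k) * ((w+k) choose (w+1)))" by simp
  also have "\<dots> = (\<Sum>k<m. (m-(k+1)) * ((w+k) choose (w+1)) + ((w+k) choose (w+1)))"
    proof (rule sum.cong)
    fix k assume "k \<in> {..<m}"
    then have "m - k = (m - (k+1)) + 1" by simp
    then show "(m-k) * ((w+k) choose (w+1)) = (m-(k+1)) * ((w+k) choose (w+1)) + ((w+k) choose (w+1))" by (simp only: add_mult_distrib)
  qed simp
  also have "\<dots> = ((w+m) choose (w+3)) + ((w+m) choose (w+2))"
    using Suc hB by (simp add: sum.distrib)
  also have "\<dots> = (w + Suc m) choose (w+3)"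
    by (simp add: binomial_Suc_Suc numeral_3_eq_3 numeral_2_eq_2)
  finally show ?case .
qed

lemma h0: "(\<Sum>n\<le>m. (if 2 \<le> n then m - n else 0)) = (m - 1) choose 2"
proof (induction m)
  case 0 then show ?case by simp
next
  case (Suc m)
  have "(\<Sum>n\<le>Suc m. (if 2 \<le> n then Suc m - n else 0))
      = (\<Sum>n\<le>m. (if 2 \<le> n then Suc m - n else 0))" by simp
  also have "\<dots> = (\<Sum>n\<le>m. (if 2 \<le> n then m - n else 0) + (if 2 \<le> n then 1 else 0))"
    by (rule sum.cong) auto
  also have "\<dots> = ((m - 1) choose 2) + card {2..m}"
    using Suc by (simp add: sum.distrib sum.If_cases Int_def atLeastAtMost_def atLeast_def atMost_def conj_commute)
  also have "\<dots> = (Suc m - 1) choose 2"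
    by (cases m) (auto simp: binomial_Suc_Suc numeral_2_eq_2)
  finally show ?case .
qed

lemma set_eq: "{(d, n). d + n = (m::nat)} = (\<lambda>n. (m - n, n)) ` {..m}"
  by (auto simp: image_iff)

lemma inj: "inj_on (\<lambda>n::nat. (m - n, n)) A"
  by (auto simp: inj_on_def)

lemma hyp0: "hypersolid 0 d n = (if 2 \<le> n then d else 0)"
  by (auto simp: hypersolid_def ibinom_def)

lemma hypS0: "hypersolid (Suc w) d 0 = 0"
  by (auto simp: hypersolid_def ibinom_def)

lemma hypSS: "hypersolid (Suc w) d (Suc k) = ((w+k) choose w) + d * ((w+k) choose (w+1))"
proof -
  have a: "int (Suc w) + int (Suc k) - 2 = int (w+k)" by simp
  have b: "int (Suc w) - 1 = int w" by simp
  have c: "int (Suc w) = int (w+1)" by simp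
  have e1: "ibinom (int (w+k)) (int w) = (w+k) choose w"
    unfolding ibinom_def nat_int by simp
  have e2: "ibinom (int (w+k)) (int (Suc w)) = (w+k) choose (w+1)"
    unfolding ibinom_def nat_int by (auto simp: binomial_eq_0)
  show ?thesis by (simp only: hypersolid_def a b e1 e2)
qed

theorem theorem1:
  fixes s v :: nat
  assumes "s \<ge> 2" and "v \<le> s"
  shows "((\<Sum>(d, n) \<in> {(d, n). d + n = s - v}. hypersolid v d n) =
           (if v = 0 then ((s - 1) choose 2) else ((s - 1) choose v) + ((s - 1) choose (v + 2))))
       \<and> (card {(d, n). d + n = s - v \<and> hypersolid v d n \<noteq> 0} =
           (if v = 0 then s - 2 else s - v))"
proof -
  define m where "m = s - v"
  have sum1: "(\<Sum>(d, n) \<in> {(d, n). d + n = m}. hypersolid v d n)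
      = (\<Sum>n\<le>m. hypersolid v (m - n) n)"
    unfolding set_eq by (subst sum.reindex[OF inj]) simp
  have cset: "{(d, n). d + n = m \<and> hypersolid v d n \<noteq> 0}
      = (\<lambda>n. (m - n, n)) ` {n. n \<le> m \<and> hypersolid v (m - n) n \<noteq> 0}"
    by (auto simp: image_iff)
  have card1: "card {(d, n). d + n = m \<and> hypersolid v d n \<noteq> 0}
      = card {n. n \<le> m \<and> hypersolid v (m - n) n \<noteq> 0}"
    unfolding cset by (rule card_image[OF inj])
  show ?thesis
  proof (cases v)
    case 0
    have ms: "m = s" using 0 m_def by simp
    have S: "(\<Sum>n\<le>m. hypersolid v (m - n) n) = (s - 1) choose 2"
      using h0[of s] by (simp add: hyp0 0 ms)
    have "{n. n \<le> m \<and> hypersolid v (m - n) n \<noteq> 0} = {2..<s}"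
      by (auto simp: hyp0 0 ms)
    then show ?thesis using S sum1 card1 0 m_def by simp
  next
    case (Suc w)
    have sm: "s - 1 = w + m" using Suc m_def assms by simp
    have "(\<Sum>n\<le>m. hypersolid v (m - n) n) = (\<Sum>n<Suc m. hypersolid v (m - n) n)"
      by (simp add: lessThan_Suc_atMost)
    also have "\<dots> = (\<Sum>k<m. hypersolid v (m - Suc k) (Suc k))"
      by (subst sum.lessThan_Suc_shift) (simp add: Suc hypS0)
    also have "\<dots> = (\<Sum>k<m. ((w+k) choose w) + (m - (k+1)) * ((w+k) choose (w+1)))"
      by (simp add: Suc hypSS)
    also have "\<dots> = ((s-1) choose v) + ((s-1) choose (v+2))"
      by (simp only: sum.distrib hA hC) (use sm in \<open>simp add: Suc numeral_3_eq_3\<close>)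
    finally have S: "(\<Sum>n\<le>m. hypersolid v (m - n) n) = ((s-1) choose v) + ((s-1) choose (v+2))" .
    have "{n. n \<le> m \<and> hypersolid v (m - n) n \<noteq> 0} = {1..m}"
    proof -
      have "n \<noteq> 0 \<Longrightarrow> hypersolid v (m - n) n \<noteq> 0" for n
        by (cases n) (auto simp: Suc hypSS)
      moreover have "hypersolid v (m - 0) 0 = 0"
        unfolding Suc by (rule hypS0)
      ultimately have "(n \<le> m \<and> hypersolid v (m - n) n \<noteq> 0) = (n \<in> {1..m})" for n
        by (cases "n = 0") auto
      then show ?thesis by blast
    qed
    then show ?thesis using S sum1 card1 Suc m_def by simp
  qed
qed

end
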